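(* For every integer $m\ge 1$, $$\sum_{b=0}^{m}\sum_{d=0}^{b}\sum_{a=d}^{m-b}(-1)^{a-d}\binom{m-b}{a}\binom{a+b-d}{b}\binom{b}{d}=1.$$ *)

theory Defs
  imports Main
begin

end

theory Submission
  imports Defs
begin

lemma F_step:
  fixes a b :: nat
  shows "(\<Sum>d\<le>Suc b. (-1::int)^d * int (Suc b choose d) * int ((a + Suc b - d) choose Suc b))
       = (\<Sum>d\<le>b. (-1::int)^d * int (b choose d) * int ((a + b - d) choose b))"
proof -
  define G where "G d = int ((a + Suc b - d) choose Suc b)" for d
  have "(\<Sum>d\<le>Suc b. (-1::int)^d * int (Suc b choose d) * G d)
      = G 0 + (\<Sum>d\<le>b. (-1::int)^(Suc d) * int (Suc b choose Suc d) * G (Suc d))"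
    by (subst sum.atMost_Suc_shift) simp
  also have "\<dots> = G 0 + (\<Sum>d\<le>b. (-1::int)^(Suc d) * int (b choose Suc d) * G (Suc d))
       + (\<Sum>d\<le>b. (-1::int)^(Suc d) * int (b choose d) * G (Suc d))"
    unfolding add.assoc sum.distrib[symmetric] by (rule arg_cong[where f="\<lambda>x. G 0 + x"], rule sum.cong) (simp_all add: algebra_simps)
  also have "G 0 + (\<Sum>d\<le>b. (-1::int)^(Suc d) * int (b choose Suc d) * G (Suc d))
      = (\<Sum>d\<le>Suc b. (-1::int)^d * int (b choose d) * G d)"
    by (simp only: sum.atMost_Suc_shift[of _ "Suc b"] sum.atMost_Suc_shift[of _ b]) simp
  also have "\<dots> = (\<Sum>d\<le>b. (-1::int)^d * int (b choose d) * G d)"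
    by simp
  also have "(\<Sum>d\<le>b. (-1::int)^d * int (b choose d) * G d) + (\<Sum>d\<le>b. (-1::int)^(Suc d) * int (b choose d) * G (Suc d))
     = (\<Sum>d\<le>b. (-1::int)^d * int (b choose d) * (G d - G (Suc d)))"
    unfolding sum.distrib[symmetric] by (rule sum.cong) (simp_all add: right_diff_distrib)
  also have "\<dots> = (\<Sum>d\<le>b. (-1::int)^d * int (b choose d) * int ((a + b - d) choose b))"
  proof (rule sum.cong)
    fix d assume "d \<in> {..b}"
    then have "d \<le> b" by simp
    then have e1: "a + Suc b - d = Suc (a + b - d)" and e2: "a + Suc b - Suc d = a + b - d" by auto
    have "G d - G (Suc d) = int ((a + b - d) choose b)"
      unfolding G_def e1 e2 by simp
    then show "(-1::int)^d * int (b choose d) * (G d - G (Suc d))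
        = (-1::int)^d * int (b choose d) * int ((a + b - d) choose b)" by simp
  qed simp
  finally show ?thesis unfolding G_def .
qed

lemma F_one:
  fixes a b :: nat
  shows "(\<Sum>d\<le>b. (-1::int)^d * int (b choose d) * int ((a + b - d) choose b)) = 1"
proof (induction b)
  case 0 then show ?case by simp
next
  case (Suc b) then show ?case using F_step[of b a] by simp
qed

lemma inner:
  fixes n b :: nat
  shows "(\<Sum>d=0..b. \<Sum>a=d..n.
            (-1::int) ^ (a - d) * int (n choose a) * int ((a + b - d) choose b) * int (b choose d))
       = (\<Sum>a\<le>n. (-1::int)^a * int (n choose a))"
proof -
  define t where "t a d = (-1::int) ^ (a - d) * int (n choose a) * int ((a + b - d) choose b) * int (b choose d)" for a d
  have t_eq: "t a d = (-1::int)^a * int (n choose a) * ((-1::int)^d * int (b choose d) * int ((a + b - d) choose b))"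
    if "d \<le> b" for a d
  proof (cases "d \<le> a")
    case True
    have "(-1::int)^a = (-1)^(a-d) * (-1)^d"
      using True by (simp flip: power_add)
    then have "(-1::int)^a * (-1)^d = (-1)^(a-d) * ((-1)^d * (-1)^d)" by simp
    also have "\<dots> = (-1)^(a-d)" by (simp flip: power_add)
    finally have "(-1::int)^a * (-1)^d = (-1)^(a-d)" .
    then show ?thesis unfolding t_def by (metis (no_types, lifting) mult.commute mult.left_commute)
  next
    case False
    then have "a + b - d < b" using that by linarith
    then show ?thesis unfolding t_def by simp
  qed
  have "(\<Sum>d=0..b. \<Sum>a=d..n. t a d) = (\<Sum>d=0..b. \<Sum>a=0..n. t a d)"
  proof (rule sum.cong)
    fix d assume "d \<in> {0..b}"
    then have db: "d \<le> b" by simp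
    show "(\<Sum>a=d..n. t a d) = (\<Sum>a=0..n. t a d)"
    proof (rule sum.mono_neutral_left)
      show "\<forall>i\<in>{0..n} - {d..n}. t i d = 0"
      proof
        fix i assume "i \<in> {0..n} - {d..n}"
        then have "i < d" by auto
        then have "i + b - d < b" using db by linarith
        then show "t i d = 0" unfolding t_def by simp
      qed
    qed auto
  qed simp
  also have "\<dots> = (\<Sum>a=0..n. \<Sum>d=0..b. t a d)" by (rule sum.swap)
  also have "\<dots> = (\<Sum>a=0..n. (-1::int)^a * int (n choose a))"
  proof (rule sum.cong)
    fix a assume "a \<in> {0..n}"
    have "(\<Sum>d=0..b. t a d) = (\<Sum>d\<le>b. (-1::int)^a * int (n choose a) * ((-1::int)^d * int (b choose d) * int ((a + b - d) choose b)))"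
      by (simp add: atLeast0AtMost t_eq)
    also have "\<dots> = (-1::int)^a * int (n choose a)"
      by (simp add: sum_distrib_left[symmetric] F_one)
    finally show "(\<Sum>d=0..b. t a d) = (-1::int)^a * int (n choose a)" .
  qed simp
  finally show ?thesis by (simp add: t_def atLeast0AtMost)
qed

theorem mainTheorem4:
  fixes m :: nat
  assumes "m \<ge> 1"
  shows "(\<Sum>b=0..m. \<Sum>d=0..b. \<Sum>a=d..m-b.
            (-1::int) ^ (a - d) * int ((m - b) choose a) * int ((a + b - d) choose b) * int (b choose d)) = 1"
proof -
  have "(\<Sum>b=0..m. \<Sum>d=0..b. \<Sum>a=d..m-b.
            (-1::int) ^ (a - d) * int ((m - b) choose a) * int ((a + b - d) choose b) * int (b choose d))
      = (\<Sum>b=0..m. if b = m then 1 else 0)"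
  proof (rule sum.cong)
    fix b assume b: "b \<in> {0..m}"
    show "(\<Sum>d=0..b. \<Sum>a=d..m-b.
            (-1::int) ^ (a - d) * int ((m - b) choose a) * int ((a + b - d) choose b) * int (b choose d))
        = (if b = m then 1 else 0)"
    proof (cases "b = m")
      case True then show ?thesis by (subst inner) simp
    next
      case False
      then have "m - b > 0" using b by auto
      then show ?thesis using False by (subst inner) (simp add: choose_alternating_sum)
    qed
  qed simp
  also have "\<dots> = 1" by simp
  finally show ?thesis .
qed

end
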